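(* Let $r:\Theta^K\times S_K\to[0,1]$ be a swapping ratio, i.e. for every $\boldsymbol\theta\in\Theta^K$ the map $r(\boldsymbol\theta,\cdot)$ is a probability mass function on $S_K$, and for every $\sigma\in S_K$ the map $r(\cdot,\sigma)$ is measurable on $(\Theta^K,\mathcal B^K)$. Define the swapping acceptance probability $$\alpha_{\mathrm{swap}}(\boldsymbol\theta,\sigma)=\begin{cases}\min\left\{1,\dfrac{\boldsymbol\pi(\boldsymbol\theta_\sigma)\,r(\boldsymbol\theta_\sigma,\sigma^{-1})}{\boldsymbol\pi(\boldsymbol\theta)\,r(\boldsymbol\theta,\sigma)}\right\}, & r(\boldsymbol\theta,\sigma)>0,\\ 0,& r(\boldsymbol\theta,\sigma)=0,\end{cases}$$ and the swapping Markov kernel $$\mathbf q(\boldsymbol\theta,B)=\sum_{\sigma\in S_K} r(\boldsymbol\theta,\sigma)\Big[(1-\alpha_{\mathrm{swap}}(\boldsymbol\theta,\sigma))\delta_{\boldsymbol\theta}(B)+\alpha_{\mathrm{swap}}(\boldsymbol\theta,\sigma)\delta_{\boldsymbol\theta_\sigma}(B)\Big],\qquad \boldsymbol\theta\in\Theta^K,\ B\in\mathcal B^K.$$ Then $\mathbf q$ is reversible with respect to the product measure $\boldsymbol\mu$.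
   Context: Let $\Theta$ be a separable Banach space with Borel $\sigma$-algebra $\mathcal B(\Theta)$, $\mu_{\mathrm{pr}}$ a probability measure on $\Theta$, and $\Phi:\Theta\to\mathbb R$ a measurable potential. Fix $K\ge1$ and temperatures $1=T_1<T_2<\dots<T_K\le\infty$. For $k=1,\dots,K$, $\mu_k$ is the probability measure with $\mu_{\mathrm{pr}}$-density $\pi_k(\theta)=e^{-\Phi(\theta)/T_k}/Z_k$, $Z_k=\int_\Theta e^{-\Phi(\theta)/T_k}\mu_{\mathrm{pr}}(d\theta)$ (with $\mu_K=\mu_{\mathrm{pr}}$ if $T_K=\infty$). Let $\Theta^K$ be the $K$-fold product with product $\sigma$-algebra $\mathcal B^K$, $\boldsymbol\mu_{\mathrm{pr}}=\mu_{\mathrm{pr}}\times\dots\times\mu_{\mathrm{pr}}$, and $\boldsymbol\mu=\mu_1\times\dots\times\mu_K$, which has $\boldsymbol\mu_{\mathrm{pr}}$-density $\boldsymbol\pi(\boldsymbol\theta)=\prod_{k=1}^K\pi_k(\theta_k)$. Let $\mathscr S_K$ be the set of permutations of $\{1,\dots,K\}$ and $S_K\subseteq\mathscr S_K$ a subset closed under inversion. For $\sigma\in S_K$ and $\boldsymbol\theta=(\theta_1,\dots,\theta_K)$, write $\boldsymbol\theta_\sigma=(\theta_{\sigma(1)},\dots,\theta_{\sigma(K)})$. A Markov kernel $p$ on a space $W$ is $\nu$-reversible if $\int_B p(\theta,A)\nu(d\theta)=\int_A p(\theta,B)\nu(d\theta)$ for all measurable $A,B$. $\delta_{\boldsymbol\theta}$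 is the Dirac measure at $\boldsymbol\theta$. *)

theory Defs
  imports "HOL-Probability.Probability" "HOL-Combinatorics.Permutations"
begin

text \<open>Inverse temperature 1/T, with 1/\<infinity> = 0 (so T = \<infinity> gives the prior).\<close>
definition invtemp :: "ereal \<Rightarrow> real" where
  "invtemp T = (if T = \<infinity> then 0 else 1 / real_of_ereal T)"

definition tdens :: "'a measure \<Rightarrow> ('a \<Rightarrow> real) \<Rightarrow> (nat \<Rightarrow> ereal) \<Rightarrow> nat \<Rightarrow> 'a \<Rightarrow> real" where
  "tdens M \<Phi> T k x =
     exp (- \<Phi> x * invtemp (T k)) / (\<integral>y. exp (- \<Phi> y * invtemp (T k)) \<partial>M)"

definition tmeas :: "'a measure \<Rightarrow> ('a \<Rightarrow> real) \<Rightarrow> (nat \<Rightarrow> ereal) \<Rightarrow> nat \<Rightarrow> 'a measure" where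
  "tmeas M \<Phi> T k = density M (\<lambda>x. ennreal (tdens M \<Phi> T k x))"

definition pdens :: "nat \<Rightarrow> 'a measure \<Rightarrow> ('a \<Rightarrow> real) \<Rightarrow> (nat \<Rightarrow> ereal) \<Rightarrow> (nat \<Rightarrow> 'a) \<Rightarrow> real" where
  "pdens K M \<Phi> T \<theta> = (\<Prod>k\<in>{1..K}. tdens M \<Phi> T k (\<theta> k))"

definition permute_state :: "(nat \<Rightarrow> 'a) \<Rightarrow> (nat \<Rightarrow> nat) \<Rightarrow> (nat \<Rightarrow> 'a)" where
  "permute_state \<theta> \<sigma> = \<theta> \<circ> \<sigma>"

definition alpha_swap ::
  "((nat \<Rightarrow> 'a) \<Rightarrow> real) \<Rightarrow> ((nat \<Rightarrow> 'a) \<Rightarrow> (nat \<Rightarrow> nat) \<Rightarrow> real) \<Rightarrow> (nat \<Rightarrow> 'a) \<Rightarrow> (nat \<Rightarrow> nat) \<Rightarrow> real" where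
  "alpha_swap \<pi> r \<theta> \<sigma> =
     (if r \<theta> \<sigma> > 0
      then min 1 ((\<pi> (permute_state \<theta> \<sigma>) * r (permute_state \<theta> \<sigma>) (inv \<sigma>)) / (\<pi> \<theta> * r \<theta> \<sigma>))
      else 0)"

definition q_swap ::
  "(nat \<Rightarrow> nat) set \<Rightarrow> ((nat \<Rightarrow> 'a) \<Rightarrow> real) \<Rightarrow> ((nat \<Rightarrow> 'a) \<Rightarrow> (nat \<Rightarrow> nat) \<Rightarrow> real)
    \<Rightarrow> (nat \<Rightarrow> 'a) \<Rightarrow> (nat \<Rightarrow> 'a) set \<Rightarrow> real" where
  "q_swap S \<pi> r \<theta> B =
     (\<Sum>\<sigma>\<in>S. r \<theta> \<sigma> * ((1 - alpha_swap \<pi> r \<theta> \<sigma>) * indicator B \<theta>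
                        + alpha_swap \<pi> r \<theta> \<sigma> * indicator B (permute_state \<theta> \<sigma>)))"

definition reversible :: "'b measure \<Rightarrow> ('b \<Rightarrow> 'b set \<Rightarrow> real) \<Rightarrow> bool" where
  "reversible \<nu> p \<longleftrightarrow>
     (\<forall>A\<in>sets \<nu>. \<forall>B\<in>sets \<nu>.
        (\<integral>\<^sup>+x\<in>B. ennreal (p x A) \<partial>\<nu>) = (\<integral>\<^sup>+x\<in>A. ennreal (p x B) \<partial>\<nu>))"

end

theory Submission
  imports Defs
begin

lemma PiM_density_prod:
  fixes M :: "'a measure" and f :: "nat \<Rightarrow> 'a \<Rightarrow> real"
  assumes I: "finite I" and M: "prob_space M"
    and fm: "\<And>i. i \<in> I \<Longrightarrow> f i \<in> borel_measurable M"
    and fnn: "\<And>i x. i \<in> I \<Longrightarrow> 0 \<le> f i x"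
    and fi: "\<And>i. i \<in> I \<Longrightarrow> integrable M (f i)"
  shows "PiM I (\<lambda>i. density M (\<lambda>x. ennreal (f i x))) =
         density (PiM I (\<lambda>_. M)) (\<lambda>x. ennreal (\<Prod>i\<in>I. f i (x i)))"
proof -
  define N where "N i = (if i \<in> I then density M (\<lambda>x. ennreal (f i x)) else M)" for i
  have eq1: "PiM I (\<lambda>i. density M (\<lambda>x. ennreal (f i x))) = PiM I N"
    by (rule PiM_cong) (auto simp: N_def)
  interpret PM: prob_space M by fact
  have sfN: "sigma_finite_measure (N i)" for i
  proof (cases "i \<in> I")
    case True
    have "emeasure (density M (\<lambda>x. ennreal (f i x))) (space M) = (\<integral>\<^sup>+x. ennreal (f i x) \<partial>M)"
      using fm[OF True] by (simp add: emeasure_density nn_integral_density)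
    also have "\<dots> = ennreal (integral\<^sup>L M (f i))"
      using fi[OF True] fnn[OF True] by (intro nn_integral_eq_integral) auto
    finally have "finite_measure (density M (\<lambda>x. ennreal (f i x)))"
      by (intro finite_measureI) simp
    then show ?thesis using True by (simp add: N_def finite_measure.axioms(1))
  next
    case False
    then show ?thesis by (simp add: N_def PM.sigma_finite_measure)
  qed
  interpret PN: product_sigma_finite N by (simp add: product_sigma_finite_def sfN)
  interpret PMM: product_sigma_finite "\<lambda>_. M" by (simp add: product_sigma_finite_def PM.sigma_finite_measure)
  have setsN: "sets (N i) = sets M" for i by (simp add: N_def)
  have "density (PiM I (\<lambda>_. M)) (\<lambda>x. ennreal (\<Prod>i\<in>I. f i (x i))) = PiM I N"
  proof (rule PN.PiM_eqI[OF I])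
    show "sets (density (PiM I (\<lambda>_. M)) (\<lambda>x. ennreal (\<Prod>i\<in>I. f i (x i)))) = sets (PiM I N)"
      by (simp add: setsN cong: sets_PiM_cong)
  next
    fix A assume A: "\<And>i. i \<in> I \<Longrightarrow> A i \<in> sets (N i)"
    then have A': "\<And>i. i \<in> I \<Longrightarrow> A i \<in> sets M" by (simp add: setsN)
    have PA: "Pi\<^sub>E I A \<in> sets (PiM I (\<lambda>_. M))"
      using A' by (intro sets_PiM_I_finite I) auto
    have meas: "(\<lambda>x. ennreal (\<Prod>i\<in>I. f i (x i))) \<in> borel_measurable (PiM I (\<lambda>_. M))"
      using fm by measurable
    have "emeasure (density (PiM I (\<lambda>_. M)) (\<lambda>x. ennreal (\<Prod>i\<in>I. f i (x i)))) (Pi\<^sub>E I A)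
        = (\<integral>\<^sup>+x. ennreal (\<Prod>i\<in>I. f i (x i)) * indicator (Pi\<^sub>E I A) x \<partial>PiM I (\<lambda>_. M))"
      using PA meas by (simp add: emeasure_density)
    also have "\<dots> = (\<integral>\<^sup>+x. (\<Prod>i\<in>I. ennreal (f i (x i)) * indicator (A i) (x i)) \<partial>PiM I (\<lambda>_. M))"
    proof (rule nn_integral_cong)
      fix x assume x: "x \<in> space (PiM I (\<lambda>_. M))"
      then have ext: "x \<in> extensional I" by (simp add: space_PiM PiE_def)
      have "indicator (Pi\<^sub>E I A) x = (\<Prod>i\<in>I. indicator (A i) (x i) :: ennreal)"
      proof (cases "x \<in> Pi\<^sub>E I A")
        case True
        then show ?thesis by (auto simp: indicator_def PiE_def Pi_def)
      next
        case False
        then obtain j where j: "j \<in> I" "x j \<notin> A j" using ext by (auto simp: PiE_def Pi_def)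
        have "(\<Prod>i\<in>I. indicator (A i) (x i) :: ennreal) = 0"
          using j I by (intro prod_zero) (auto intro!: bexI[of _ j])
        then show ?thesis using False by simp
      qed
      then show "ennreal (\<Prod>i\<in>I. f i (x i)) * indicator (Pi\<^sub>E I A) x
          = (\<Prod>i\<in>I. ennreal (f i (x i)) * indicator (A i) (x i))"
        using fnn by (simp add: prod.distrib prod_ennreal)
    qed
    also have "\<dots> = (\<Prod>i\<in>I. (\<integral>\<^sup>+y. ennreal (f i y) * indicator (A i) y \<partial>M))"
      using fm A' by (intro PMM.product_nn_integral_prod I) auto
    also have "\<dots> = (\<Prod>i\<in>I. emeasure (N i) (A i))"
      using fm A' by (intro prod.cong refl) (simp add: N_def emeasure_density)
    finally show "emeasure (density (PiM I (\<lambda>_. M)) (\<lambda>x. ennreal (\<Prod>i\<in>I. f i (x i)))) (Pi\<^sub>E I A) = (\<Prod>i\<in>I. emeasure (N i) (A i))" .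
  qed
  then show ?thesis using eq1 by simp
qed

lemma perm_meas:
  assumes "\<sigma> permutes I"
  shows "(\<lambda>x. permute_state x \<sigma>) \<in> measurable (PiM I (\<lambda>_. M)) (PiM I (\<lambda>_. M))"
proof -
  have "(\<lambda>x i. x (\<sigma> i)) \<in> measurable (PiM I (\<lambda>_. M)) (PiM I (\<lambda>_. M))"
  proof (rule measurable_PiM_single')
    fix i assume "i \<in> I"
    then have "\<sigma> i \<in> I" by (simp add: permutes_in_image[OF assms])
    then show "(\<lambda>\<omega>. \<omega> (\<sigma> i)) \<in> measurable (PiM I (\<lambda>_. M)) M" by (rule measurable_component_singleton)
  next
    show "(\<lambda>x i. x (\<sigma> i)) \<in> space (PiM I (\<lambda>_. M)) \<rightarrow> (\<Pi>\<^sub>E i\<in>I. space M)"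
    proof (rule Pi_I)
      fix x assume "x \<in> space (PiM I (\<lambda>_. M))"
      then have x: "x \<in> (\<Pi>\<^sub>E i\<in>I. space M)" by (simp add: space_PiM)
      show "(\<lambda>i. x (\<sigma> i)) \<in> (\<Pi>\<^sub>E i\<in>I. space M)"
      proof (rule PiE_I)
        fix i assume "i \<in> I"
        then have "\<sigma> i \<in> I" by (simp add: permutes_in_image[OF assms])
        then show "x (\<sigma> i) \<in> space M" by (rule PiE_mem[OF x])
      next
        fix i assume "i \<notin> I"
        then have "\<sigma> i = i" by (rule permutes_not_in[OF assms])
        then show "x (\<sigma> i) = undefined" using PiE_arb[OF x \<open>i \<notin> I\<close>] by simp
      qed
    qed
  qed
  then show ?thesis unfolding permute_state_def comp_def .
qed

lemma perm_space:
  assumes "\<sigma> permutes I" "x \<in> space (PiM I (\<lambda>_. M))"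
  shows "permute_state x \<sigma> \<in> space (PiM I (\<lambda>_. M))"
  by (rule measurable_space[OF perm_meas[OF assms(1)] assms(2)])

lemma perm_distr:
  assumes "prob_space M" "\<sigma> permutes I"
  shows "distr (PiM I (\<lambda>_. M)) (PiM I (\<lambda>_. M)) (\<lambda>x. permute_state x \<sigma>) = PiM I (\<lambda>_. M)"
proof -
  have "distr (PiM I (\<lambda>_. M)) (PiM I (\<lambda>_. M)) (\<lambda>x. permute_state x \<sigma>)
      = distr (PiM I (\<lambda>_. M)) (PiM I (\<lambda>i. (\<lambda>_. M) (\<sigma> i))) (\<lambda>\<omega>. \<lambda>n\<in>I. \<omega> (\<sigma> n))"
  proof (rule distr_cong)
    fix x assume "x \<in> space (PiM I (\<lambda>_. M))"
    then have x: "x \<in> (\<Pi>\<^sub>E i\<in>I. space M)" by (simp add: space_PiM)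
    show "permute_state x \<sigma> = (\<lambda>n\<in>I. x (\<sigma> n))"
    proof
      fix n show "permute_state x \<sigma> n = (\<lambda>n\<in>I. x (\<sigma> n)) n"
      proof (cases "n \<in> I")
        case False
        then have "\<sigma> n = n" by (rule permutes_not_in[OF assms(2)])
        then have "permute_state x \<sigma> n = x n" by (simp add: permute_state_def)
        also have "x n = undefined" by (rule PiE_arb[OF x False])
        finally show ?thesis using False by simp
      qed (simp add: permute_state_def)
    qed
  qed simp_all
  also have "\<dots> = PiM I (\<lambda>i. (\<lambda>_. M) (\<sigma> i))"
  proof (rule distr_PiM_reindex)
    show "inj_on \<sigma> I" by (rule permutes_inj_on[OF assms(2)])
    show "\<sigma> \<in> I \<rightarrow> I" by (rule Pi_I) (simp add: permutes_in_image[OF assms(2)])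
  qed (rule assms(1))
  finally show ?thesis by simp
qed

lemma perm_perm_inv:
  assumes "\<sigma> permutes I"
  shows "permute_state (permute_state x \<sigma>) (inv \<sigma>) = x"
  using assms by (simp add: permute_state_def fun_eq_iff permutes_inverses)

lemma min_lemma:
  fixes a rr b :: real
  assumes "0 \<le> a" "0 \<le> b"
  shows "a * (if rr > 0 then min 1 (b / a) else 0) = (if rr > 0 then min a b else 0)"
proof (cases "a = 0")
  case True then show ?thesis using assms by auto
next
  case False
  then have "a > 0" using assms by simp
  then have "a * min 1 (b / a) = min a b"
    by (cases "b \<le> a") (simp_all add: min_def field_simps)
  then show ?thesis by simp
qed

theorem proposition1:
  fixes M :: "'a::{banach, second_countable_topology} measure"
    and \<Phi> :: "'a \<Rightarrow> real"
    and K :: nat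
    and T :: "nat \<Rightarrow> ereal"
    and S :: "(nat \<Rightarrow> nat) set"
    and r :: "(nat \<Rightarrow> 'a) \<Rightarrow> (nat \<Rightarrow> nat) \<Rightarrow> real"
  assumes prior: "prob_space M" and sets_M: "sets M = sets borel"
    and Phi_meas: "\<Phi> \<in> borel_measurable borel"
    and K_ge: "K \<ge> 1"
    and T1: "T 1 = 1"
    and T_mono: "\<And>i j. 1 \<le> i \<Longrightarrow> i < j \<Longrightarrow> j \<le> K \<Longrightarrow> T i < T j"
    and Z_fin: "\<And>k. k \<in> {1..K} \<Longrightarrow> integrable M (\<lambda>x. exp (- \<Phi> x * invtemp (T k)))"
    and S_perm: "\<And>\<sigma>. \<sigma> \<in> S \<Longrightarrow> \<sigma> permutes {1..K}"
    and S_inv: "\<And>\<sigma>. \<sigma> \<in> S \<Longrightarrow> inv \<sigma> \<in> S"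
    and r_range: "\<And>\<theta> \<sigma>. \<theta> \<in> space (PiM {1..K} (\<lambda>_. M)) \<Longrightarrow> \<sigma> \<in> S \<Longrightarrow> 0 \<le> r \<theta> \<sigma> \<and> r \<theta> \<sigma> \<le> 1"
    and r_sum: "\<And>\<theta>. \<theta> \<in> space (PiM {1..K} (\<lambda>_. M)) \<Longrightarrow> (\<Sum>\<sigma>\<in>S. r \<theta> \<sigma>) = 1"
    and r_meas: "\<And>\<sigma>. \<sigma> \<in> S \<Longrightarrow> (\<lambda>\<theta>. r \<theta> \<sigma>) \<in> borel_measurable (PiM {1..K} (\<lambda>_. M))"
  shows "reversible (PiM {1..K} (\<lambda>k. tmeas M \<Phi> T k)) (q_swap S (pdens K M \<Phi> T) r)"
proof -
  define I where "I = {1..K}"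
  define P where "P = PiM I (\<lambda>_. M)"
  define f where "f = tdens M \<Phi> T"
  define \<pi> where "\<pi> = pdens K M \<Phi> T"
  have \<pi>_eq: "\<pi> x = (\<Prod>k\<in>I. f k (x k))" for x by (simp add: \<pi>_def pdens_def I_def f_def)
  have finI: "finite I" by (simp add: I_def)
  have finS: "finite S"
    using S_perm by (intro finite_subset[OF _ finite_permutations[of "{1..K}"]]) auto
  have SP: "\<sigma> \<in> S \<Longrightarrow> \<sigma> permutes I" for \<sigma> using S_perm by (simp add: I_def)
  have Phi_M: "\<Phi> \<in> borel_measurable M"
    unfolding measurable_cong_sets[OF sets_M refl] by (rule Phi_meas)
  have fm: "f k \<in> borel_measurable M" for k
    unfolding f_def tdens_def using Phi_M by measurable
  have fnn: "0 \<le> f k x" for k x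
    unfolding f_def tdens_def by (intro divide_nonneg_nonneg integral_nonneg) auto
  have \<pi>nn: "0 \<le> \<pi> x" for x unfolding \<pi>_eq by (intro prod_nonneg) (auto simp: fnn)
  have \<pi>m: "\<pi> \<in> borel_measurable P"
    unfolding P_def \<pi>_eq[abs_def] using fm by measurable
  have nu: "PiM {1..K} (\<lambda>k. tmeas M \<Phi> T k) = density P (\<lambda>x. ennreal (\<pi> x))"
  proof -
    have "PiM I (\<lambda>k. density M (\<lambda>x. ennreal (f k x))) = density P (\<lambda>x. ennreal (\<Prod>k\<in>I. f k (x k)))"
      unfolding P_def
    proof (rule PiM_density_prod[OF finI prior fm fnn])
      fix i assume "i \<in> I"
      then have "integrable M (\<lambda>x. exp (- \<Phi> x * invtemp (T i)))" using Z_fin by (simp add: I_def)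
      then show "integrable M (f i)" unfolding f_def tdens_def by (rule integrable_divide_zero)
    qed
    then show ?thesis unfolding tmeas_def f_def[symmetric] I_def[symmetric] \<pi>_eq[abs_def] P_def .
  qed
  have permm: "\<sigma> \<in> S \<Longrightarrow> (\<lambda>x. permute_state x \<sigma>) \<in> measurable P P" for \<sigma>
    unfolding P_def by (intro perm_meas SP)
  have rm: "\<sigma> \<in> S \<Longrightarrow> (\<lambda>x. r x \<sigma>) \<in> borel_measurable P" for \<sigma>
    unfolding P_def I_def by (rule r_meas)
  have rnn: "x \<in> space P \<Longrightarrow> \<sigma> \<in> S \<Longrightarrow> 0 \<le> r x \<sigma> \<and> r x \<sigma> \<le> 1" for x \<sigma>
    unfolding P_def I_def by (rule r_range)
  have pspace: "x \<in> space P \<Longrightarrow> \<sigma> \<in> S \<Longrightarrow> permute_state x \<sigma> \<in> space P" for x \<sigma>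
    by (rule measurable_space[OF permm])
  define \<alpha> where "\<alpha> = alpha_swap \<pi> r"
  have \<alpha>m: "\<sigma> \<in> S \<Longrightarrow> (\<lambda>x. \<alpha> x \<sigma>) \<in> borel_measurable P" for \<sigma>
  proof -
    assume s: "\<sigma> \<in> S"
    note [measurable] = rm[OF s] rm[OF S_inv[OF s]] permm[OF s] \<pi>m
    have "(\<lambda>x. r (permute_state x \<sigma>) (inv \<sigma>)) \<in> borel_measurable P"
      using measurable_comp[OF permm[OF s] rm[OF S_inv[OF s]]] by (simp add: comp_def)
    note [measurable] = this
    have "(\<lambda>x. \<pi> (permute_state x \<sigma>)) \<in> borel_measurable P"
      using measurable_comp[OF permm[OF s] \<pi>m] by (simp add: comp_def)
    note [measurable] = this
    show ?thesis unfolding \<alpha>_def alpha_swap_def by measurable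
  qed
  have \<alpha>r: "x \<in> space P \<Longrightarrow> \<sigma> \<in> S \<Longrightarrow> 0 \<le> \<alpha> x \<sigma> \<and> \<alpha> x \<sigma> \<le> 1" for x \<sigma>
    using rnn[of x \<sigma>] rnn[OF pspace S_inv, of x \<sigma>] \<pi>nn
    by (auto simp: \<alpha>_def alpha_swap_def intro!: divide_nonneg_nonneg)
  define g where "g x \<sigma> = \<pi> x * r x \<sigma> * \<alpha> x \<sigma>" for x \<sigma>
  define h where "h x \<sigma> = \<pi> x * r x \<sigma> * (1 - \<alpha> x \<sigma>)" for x \<sigma>
  have gmin: "x \<in> space P \<Longrightarrow> \<sigma> \<in> S \<Longrightarrow>
      g x \<sigma> = (if r x \<sigma> > 0 then min (\<pi> x * r x \<sigma>) (\<pi> (permute_state x \<sigma>) * r (permute_state x \<sigma>) (inv \<sigma>)) else 0)" for x \<sigma>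
    unfolding g_def \<alpha>_def alpha_swap_def
    using min_lemma[of "\<pi> x * r x \<sigma>" "\<pi> (permute_state x \<sigma>) * r (permute_state x \<sigma>) (inv \<sigma>)" "r x \<sigma>"]
      rnn[of x \<sigma>] rnn[OF pspace S_inv, of x \<sigma>] \<pi>nn
    by (simp add: mult.assoc)
  have gmin2: "x \<in> space P \<Longrightarrow> \<sigma> \<in> S \<Longrightarrow>
      g x \<sigma> = min (\<pi> x * r x \<sigma>) (\<pi> (permute_state x \<sigma>) * r (permute_state x \<sigma>) (inv \<sigma>))" for x \<sigma>
    using gmin[of x \<sigma>] rnn[of x \<sigma>] rnn[OF pspace S_inv, of x \<sigma>] \<pi>nn[of x] \<pi>nn[of "permute_state x \<sigma>"]
    by (cases "r x \<sigma> > 0") (auto simp: min_def)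
  have gsym: "x \<in> space P \<Longrightarrow> \<sigma> \<in> S \<Longrightarrow> g (permute_state x \<sigma>) (inv \<sigma>) = g x \<sigma>" for x \<sigma>
  proof -
    assume x: "x \<in> space P" and s: "\<sigma> \<in> S"
    have ii: "inv (inv \<sigma>) = \<sigma>" using SP[OF s] by (simp add: permutes_inv_inv)
    show ?thesis
      using gmin2[OF pspace[OF x s] S_inv[OF s]] gmin2[OF x s]
      by (simp add: ii perm_perm_inv[OF SP[OF s]] min.commute)
  qed
  have gm: "\<sigma> \<in> S \<Longrightarrow> (\<lambda>x. g x \<sigma>) \<in> borel_measurable P" for \<sigma>
    unfolding g_def using \<pi>m rm \<alpha>m by measurable
  have hm: "\<sigma> \<in> S \<Longrightarrow> (\<lambda>x. h x \<sigma>) \<in> borel_measurable P" for \<sigma>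
    unfolding h_def using \<pi>m rm \<alpha>m by measurable
  have gnn: "x \<in> space P \<Longrightarrow> \<sigma> \<in> S \<Longrightarrow> 0 \<le> g x \<sigma>" for x \<sigma>
    using \<pi>nn[of x] rnn[of x \<sigma>] \<alpha>r[of x \<sigma>] by (simp add: g_def)
  have hnn: "x \<in> space P \<Longrightarrow> \<sigma> \<in> S \<Longrightarrow> 0 \<le> h x \<sigma>" for x \<sigma>
    using \<pi>nn[of x] rnn[of x \<sigma>] \<alpha>r[of x \<sigma>] by (simp add: h_def)
  define D where "D A B \<sigma> = (\<integral>\<^sup>+x. ennreal (h x \<sigma>) * indicator (A \<inter> B) x \<partial>P)" for A B \<sigma>
  define Tm where "Tm B A \<sigma> = (\<integral>\<^sup>+x. ennreal (g x \<sigma>) * indicator B x * indicator A (permute_state x \<sigma>) \<partial>P)" for A B \<sigma>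
  have setsnu: "sets (PiM {1..K} (\<lambda>k. tmeas M \<Phi> T k)) = sets P" unfolding nu by (rule sets_density)
  have main: "(\<integral>\<^sup>+x\<in>B. ennreal (q_swap S \<pi> r x A) \<partial>PiM {1..K} (\<lambda>k. tmeas M \<Phi> T k))
      = (\<Sum>\<sigma>\<in>S. D A B \<sigma> + Tm B A \<sigma>)" if A: "A \<in> sets P" and B: "B \<in> sets P" for A B
  proof -
    have indpm: "\<sigma> \<in> S \<Longrightarrow> (\<lambda>y. indicator A (permute_state y \<sigma>) :: real) \<in> borel_measurable P" for \<sigma>
      using measurable_comp[OF permm borel_measurable_indicator[OF A]] by (simp add: comp_def)
    have indpme: "\<sigma> \<in> S \<Longrightarrow> (\<lambda>y. indicator A (permute_state y \<sigma>) :: ennreal) \<in> borel_measurable P" for \<sigma>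
      using measurable_comp[OF permm borel_measurable_indicator[OF A]] by (simp add: comp_def)
    have qm: "(\<lambda>x. q_swap S \<pi> r x A) \<in> borel_measurable P"
      unfolding q_swap_def \<alpha>_def[symmetric]
    proof (rule borel_measurable_sum)
      fix \<sigma> assume s: "\<sigma> \<in> S"
      note [measurable] = rm[OF s] \<alpha>m[OF s] indpm[OF s] A
      show "(\<lambda>x. r x \<sigma> * ((1 - \<alpha> x \<sigma>) * indicator A x + \<alpha> x \<sigma> * indicator A (permute_state x \<sigma>))) \<in> borel_measurable P"
        by measurable
    qed
    have "(\<integral>\<^sup>+x\<in>B. ennreal (q_swap S \<pi> r x A) \<partial>PiM {1..K} (\<lambda>k. tmeas M \<Phi> T k))
        = (\<integral>\<^sup>+x. ennreal (\<pi> x) * (ennreal (q_swap S \<pi> r x A) * indicator B x) \<partial>P)"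
    proof -
      note [measurable] = qm B \<pi>m
      show ?thesis unfolding nu by (intro nn_integral_density) measurable
    qed
    also have "\<dots> = (\<integral>\<^sup>+x. (\<Sum>\<sigma>\<in>S. ennreal (h x \<sigma>) * indicator (A \<inter> B) x
                 + ennreal (g x \<sigma>) * indicator B x * indicator A (permute_state x \<sigma>)) \<partial>P)"
    proof (rule nn_integral_cong)
      fix x assume x: "x \<in> space P"
      have real: "\<pi> x * q_swap S \<pi> r x A * indicator B x = (\<Sum>\<sigma>\<in>S. h x \<sigma> * indicator (A \<inter> B) x
                 + g x \<sigma> * indicator B x * indicator A (permute_state x \<sigma>))"
        by (simp add: q_swap_def \<alpha>_def[symmetric] sum_distrib_left sum_distrib_right h_def g_def
              indicator_inter_arith algebra_simps)
      have qnn: "0 \<le> q_swap S \<pi> r x A"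
        unfolding q_swap_def \<alpha>_def[symmetric] using rnn[OF x] \<alpha>r[OF x]
        by (intro sum_nonneg) auto
      have "ennreal (\<pi> x) * (ennreal (q_swap S \<pi> r x A) * indicator B x)
          = ennreal (\<pi> x * q_swap S \<pi> r x A * indicator B x)"
        using \<pi>nn[of x] qnn by (simp add: ennreal_mult indicator_def)
      also have "\<dots> = (\<Sum>\<sigma>\<in>S. ennreal (h x \<sigma> * indicator (A \<inter> B) x
                 + g x \<sigma> * indicator B x * indicator A (permute_state x \<sigma>)))"
        unfolding real using gnn[OF x] hnn[OF x] by (intro sum_ennreal[symmetric]) auto
      also have "\<dots> = (\<Sum>\<sigma>\<in>S. ennreal (h x \<sigma>) * indicator (A \<inter> B) x
                 + ennreal (g x \<sigma>) * indicator B x * indicator A (permute_state x \<sigma>))"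
        using gnn[OF x] hnn[OF x] by (intro sum.cong refl) (simp add: ennreal_plus ennreal_mult indicator_def)
      finally show "ennreal (\<pi> x) * (ennreal (q_swap S \<pi> r x A) * indicator B x)
          = (\<Sum>\<sigma>\<in>S. ennreal (h x \<sigma>) * indicator (A \<inter> B) x
                 + ennreal (g x \<sigma>) * indicator B x * indicator A (permute_state x \<sigma>))" .
    qed
    also have "\<dots> = (\<Sum>\<sigma>\<in>S. D A B \<sigma> + Tm B A \<sigma>)"
    proof -
      have "(\<integral>\<^sup>+x. (\<Sum>\<sigma>\<in>S. ennreal (h x \<sigma>) * indicator (A \<inter> B) x
                 + ennreal (g x \<sigma>) * indicator B x * indicator A (permute_state x \<sigma>)) \<partial>P)
          = (\<Sum>\<sigma>\<in>S. (\<integral>\<^sup>+x. ennreal (h x \<sigma>) * indicator (A \<inter> B) x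
                 + ennreal (g x \<sigma>) * indicator B x * indicator A (permute_state x \<sigma>) \<partial>P))"
      proof (rule nn_integral_sum)
        fix \<sigma> assume s: "\<sigma> \<in> S"
        note [measurable] = hm[OF s] gm[OF s] indpme[OF s] A B
        show "(\<lambda>x. ennreal (h x \<sigma>) * indicator (A \<inter> B) x
                 + ennreal (g x \<sigma>) * indicator B x * indicator A (permute_state x \<sigma>)) \<in> borel_measurable P"
          by measurable
      qed
      also have "\<dots> = (\<Sum>\<sigma>\<in>S. D A B \<sigma> + Tm B A \<sigma>)"
      proof (rule sum.cong[OF refl])
        fix \<sigma> assume s: "\<sigma> \<in> S"
        note [measurable] = hm[OF s] gm[OF s] indpme[OF s] A B
        show "(\<integral>\<^sup>+x. ennreal (h x \<sigma>) * indicator (A \<inter> B) x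
                 + ennreal (g x \<sigma>) * indicator B x * indicator A (permute_state x \<sigma>) \<partial>P) = D A B \<sigma> + Tm B A \<sigma>"
          unfolding D_def Tm_def by (rule nn_integral_add) measurable
      qed
      finally show ?thesis .
    qed
    finally show ?thesis .
  qed
  have Tsym: "Tm B A \<sigma> = Tm A B (inv \<sigma>)" if A: "A \<in> sets P" and B: "B \<in> sets P" and s: "\<sigma> \<in> S" for A B \<sigma>
  proof -
    define F where "F y = ennreal (g y (inv \<sigma>)) * indicator A y * indicator B (permute_state y (inv \<sigma>))" for y
    have Fm: "F \<in> borel_measurable P"
    proof -
      note [measurable] = gm[OF S_inv[OF s]] A B
      have "(\<lambda>y. indicator B (permute_state y (inv \<sigma>)) :: ennreal) \<in> borel_measurable P"
        using measurable_comp[OF permm[OF S_inv[OF s]] borel_measurable_indicator[OF B]]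
        by (simp add: comp_def)
      note [measurable] = this
      show ?thesis unfolding F_def by measurable
    qed
    have "Tm B A \<sigma> = (\<integral>\<^sup>+x. F (permute_state x \<sigma>) \<partial>P)"
      unfolding Tm_def
    proof (rule nn_integral_cong)
      fix x assume x: "x \<in> space P"
      show "ennreal (g x \<sigma>) * indicator B x * indicator A (permute_state x \<sigma>) = F (permute_state x \<sigma>)"
        unfolding F_def gsym[OF x s] perm_perm_inv[OF SP[OF s]] by (simp only: mult_ac)
    qed
    also have "\<dots> = (\<integral>\<^sup>+y. F y \<partial>distr P P (\<lambda>x. permute_state x \<sigma>))"
    proof -
      have "F \<in> borel_measurable (distr P P (\<lambda>x. permute_state x \<sigma>))"
        by (subst measurable_cong_sets[OF sets_distr refl]) (rule Fm)
      then show ?thesis by (rule nn_integral_distr[symmetric, OF permm[OF s]])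
    qed
    also have "distr P P (\<lambda>x. permute_state x \<sigma>) = P"
      unfolding P_def by (rule perm_distr[OF prior SP[OF s]])
    finally show ?thesis by (simp add: Tm_def F_def)
  qed
  show ?thesis
    unfolding reversible_def setsnu \<pi>_def[symmetric]
  proof (intro ballI)
    fix A B assume A: "A \<in> sets P" and B: "B \<in> sets P"
    have "(\<Sum>\<sigma>\<in>S. Tm B A \<sigma>) = (\<Sum>\<sigma>\<in>S. Tm A B (inv \<sigma>))"
      using A B by (intro sum.cong refl Tsym)
    also have "\<dots> = (\<Sum>\<sigma>\<in>S. Tm A B \<sigma>)"
      by (rule sum.reindex_bij_witness[where i=inv and j=inv])
         (auto simp: S_inv intro: permutes_inv_inv[OF SP])
    finally have "(\<Sum>\<sigma>\<in>S. Tm B A \<sigma>) = (\<Sum>\<sigma>\<in>S. Tm A B \<sigma>)" .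
    then show "(\<integral>\<^sup>+x\<in>A. ennreal (q_swap S \<pi> r x B) \<partial>PiM {1..K} (\<lambda>k. tmeas M \<Phi> T k)) =
               (\<integral>\<^sup>+x\<in>B. ennreal (q_swap S \<pi> r x A) \<partial>PiM {1..K} (\<lambda>k. tmeas M \<Phi> T k))"
      using main[OF A B] main[OF B A]
      by (simp add: sum.distrib D_def Int_commute)
  qed
qed

end
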